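(* For $i\in\{1,\dots,5\}$ and any $i$-regular triple $(a,b,c)$ of elements of $\alpha$, the nanoword $w^i_{a,b,c}$ satisfies $\|w^i_{a,b,c}\|=3$.
   Context: Fix a set $\alpha$ with an involution $\tau$. An $\alpha$-alphabet is a set $\mathcal A$ with a map $A\mapsto|A|\in\alpha$. A nanoword over $\alpha$ is a pair $(\mathcal A,w)$ with $\mathcal A$ a finite $\alpha$-alphabet and $w$ a word in which each letter occurs exactly twice; its length is the length of $w$. Isomorphism: bijection of alphabets preserving $|\cdot|$ carrying one word to the other letterwise. Homotopy moves ($x,y,z,t$ words in the remaining letters): (1) $(\mathcal A,xAAy)\mapsto(\mathcal A\setminus\{A\},xy)$; (2) $(\mathcal A,xAByBAz)\mapsto(\mathcal A\setminus\{A,B\},xyz)$ if $|B|=\tau(|A|)$; (3) $(\mathcal A,xAByACzBCt)\mapsto(\mathcal A,xBAyCAzCBt)$ if $A,B,C$ distinct with $|A|=|B|=|C|$. Homotopy is generated by isomorphisms, these moves and inverses. For a nanoword $w$, $\|w\|$ is half the minimal length of a nanoword homotopic to $w$. For $a,b,c\in\alpha$, with $\mathcal A=\{A,B,C\}$, $|A|=a,|B|=b,|C|=c$: $w^1_{a,b,c}=ABCABC$, $w^2_{a,b,c}=ABCACB$, $w^3_{a,b,c}=ABCBAC$, $w^4_{a,b,c}=ABCBCA$, $w^5_{a,b,c}=ABACBC$. The triple is 1-regular if $a\neq\tau(b)\neq c$; 2-regular if $c\neq\tau(b)$; 3-regular if $a\neq\tau(b)$; 4-regular if $c\neq\tau(b)$;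 5-regular unless $a=b=c=\tau(a)$. *)

theory Defs
  imports Main
begin

text \<open>Letters are natural numbers; a nanoword is a pair (lab, w) where w is a word
 and the alphabet is set w, with lab giving the projection |.| on letters.
 (Values of lab outside set w are irrelevant.)\<close>

type_synonym 'a nanoword = "(nat \<Rightarrow> 'a) \<times> nat list"

definition nanoword :: "'a nanoword \<Rightarrow> bool" where
  "nanoword u \<longleftrightarrow> (\<forall>x\<in>set (snd u). count_list (snd u) x = 2)"

definition nw_iso :: "'a nanoword \<Rightarrow> 'a nanoword \<Rightarrow> bool" where
  "nw_iso u v \<longleftrightarrow> (\<exists>f. inj_on f (set (snd u)) \<and> map f (snd u) = snd v \<and>
      (\<forall>x\<in>set (snd u). fst v (f x) = fst u x))"

definition nw_move :: "('a \<Rightarrow> 'a) \<Rightarrow> 'a nanoword \<Rightarrow> 'a nanoword \<Rightarrow> bool" where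
  "nw_move \<tau> u v \<longleftrightarrow> fst u = fst v \<and>
    ((\<exists>x y A. snd u = x @ [A, A] @ y \<and> snd v = x @ y)
   \<or> (\<exists>x y z A B. snd u = x @ [A, B] @ y @ [B, A] @ z \<and> snd v = x @ y @ z
          \<and> fst u B = \<tau> (fst u A))
   \<or> (\<exists>x y z t A B C. A \<noteq> B \<and> B \<noteq> C \<and> A \<noteq> C
          \<and> fst u A = fst u B \<and> fst u B = fst u C
          \<and> snd u = x @ [A, B] @ y @ [A, C] @ z @ [B, C] @ t
          \<and> snd v = x @ [B, A] @ y @ [C, A] @ z @ [C, B] @ t))"

definition nw_hstep :: "('a \<Rightarrow> 'a) \<Rightarrow> 'a nanoword \<Rightarrow> 'a nanoword \<Rightarrow> bool" where
  "nw_hstep \<tau> u v \<longleftrightarrow> nanoword u \<and> nanoword v \<and>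
     (nw_iso u v \<or> nw_move \<tau> u v \<or> nw_move \<tau> v u)"

definition homotopic :: "('a \<Rightarrow> 'a) \<Rightarrow> 'a nanoword \<Rightarrow> 'a nanoword \<Rightarrow> bool" where
  "homotopic \<tau> u v \<longleftrightarrow> nanoword u \<and> (nw_hstep \<tau>)\<^sup>*\<^sup>* u v"

definition nw_norm :: "('a \<Rightarrow> 'a) \<Rightarrow> 'a nanoword \<Rightarrow> nat" where
  "nw_norm \<tau> u = (LEAST n. \<exists>v. homotopic \<tau> u v \<and> length (snd v) = n) div 2"

definition lab3 :: "'a \<Rightarrow> 'a \<Rightarrow> 'a \<Rightarrow> nat \<Rightarrow> 'a" where
  "lab3 a b c = (\<lambda>x. if x = 0 then a else if x = 1 then b else c)"

text \<open>Letters A = 0, B = 1, C = 2.\<close>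
definition wabc :: "nat \<Rightarrow> 'a \<Rightarrow> 'a \<Rightarrow> 'a \<Rightarrow> 'a nanoword" where
  "wabc i a b c = (lab3 a b c,
     (if i = 1 then [0,1,2,0,1,2]
      else if i = 2 then [0,1,2,0,2,1]
      else if i = 3 then [0,1,2,1,0,2]
      else if i = 4 then [0,1,2,1,2,0]
      else [0,1,0,2,1,2]))"

definition regular :: "('a \<Rightarrow> 'a) \<Rightarrow> nat \<Rightarrow> 'a \<Rightarrow> 'a \<Rightarrow> 'a \<Rightarrow> bool" where
  "regular \<tau> i a b c \<longleftrightarrow>
     (if i = 1 then a \<noteq> \<tau> b \<and> \<tau> b \<noteq> c
      else if i = 2 then c \<noteq> \<tau> b
      else if i = 3 then a \<noteq> \<tau> b
      else if i = 4 then c \<noteq> \<tau> b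
      else \<not> (a = b \<and> b = c \<and> a = \<tau> a))"

end

theory Submission
  imports Defs "HOL-Library.Numeral_Type" "HOL-Library.Function_Algebras"
begin

datatype rcode = RLink | RDisj | RNest | RNone

definition pat :: "nat list \<Rightarrow> nat \<Rightarrow> nat \<Rightarrow> nat list" where
  "pat w X Y = filter (\<lambda>z. z = X \<or> z = Y) w"

definition rcd :: "nat list \<Rightarrow> nat \<Rightarrow> nat \<Rightarrow> rcode" where
  "rcd w X Y = (if X \<noteq> Y \<and> pat w X Y = [X,Y,X,Y] then RLink
     else if X \<noteq> Y \<and> pat w X Y = [X,X,Y,Y] then RDisj
     else if X \<noteq> Y \<and> pat w X Y = [X,Y,Y,X] then RNest else RNone)"

definition eps :: "nat list \<Rightarrow> nat \<Rightarrow> nat \<Rightarrow> 'r::comm_ring_1" where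
  "eps w X Y = (if X \<noteq> Y \<and> pat w X Y = [X,Y,X,Y] then 1
     else if X \<noteq> Y \<and> pat w X Y = [Y,X,Y,X] then -1 else 0)"

definition nval :: "('a \<Rightarrow> 'r::comm_ring_1) \<Rightarrow> (nat \<Rightarrow> 'a) \<Rightarrow> nat list \<Rightarrow> nat \<Rightarrow> 'r" where
  "nval \<phi> lab w X = (\<Sum>Y\<in>set w. eps w X Y * \<phi> (lab Y))"

definition Inv :: "('a \<Rightarrow> 'r::comm_ring_1) \<Rightarrow> ('a \<Rightarrow> 'r \<Rightarrow> 'r) \<Rightarrow>
    (rcode \<Rightarrow> 'a \<Rightarrow> 'a \<Rightarrow> 'r \<Rightarrow> 'r \<Rightarrow> 'r) \<Rightarrow> 'a nanoword \<Rightarrow> 'r" where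
  "Inv \<phi> g H u = (\<Sum>X\<in>set (snd u). g (fst u X) (nval \<phi> (fst u) (snd u) X)) +
     (\<Sum>X\<in>set (snd u). \<Sum>Y\<in>set (snd u). H (rcd (snd u) X Y) (fst u X) (fst u Y)
          (nval \<phi> (fst u) (snd u) X) (nval \<phi> (fst u) (snd u) Y))"

definition good :: "('a \<Rightarrow> 'a) \<Rightarrow> ('a \<Rightarrow> 'r::comm_ring_1) \<Rightarrow> ('a \<Rightarrow> 'r \<Rightarrow> 'r) \<Rightarrow>
    (rcode \<Rightarrow> 'a \<Rightarrow> 'a \<Rightarrow> 'r \<Rightarrow> 'r \<Rightarrow> 'r) \<Rightarrow> bool" where
  "good \<tau> \<phi> g H \<longleftrightarrow> (\<forall>x. \<phi> (\<tau> x) = - \<phi> x) \<and> (\<forall>x. g x 0 = 0) \<and> (\<forall>x s. g (\<tau> x) s = - g x s)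
    \<and> (\<forall>x y p. H RNest x y p 0 = 0) \<and> (\<forall>x y q. H RDisj x y 0 q = 0) \<and> (\<forall>x y p. H RDisj x y p 0 = 0)
    \<and> (\<forall>x y p q. H RNone x y p q = 0)
    \<and> (\<forall>r x y p q. H r (\<tau> x) y p q = - H r x y p q)
    \<and> (\<forall>r x y p q. H r x (\<tau> y) p q = - H r x y p q)
    \<and> (\<forall>x s. H RNest x (\<tau> x) s s = 0)
    \<and> (\<forall>x p q. H RLink x x p (p+q) + H RDisj x x p q + H RLink x x (p+q) q
              = H RNest x x (p+q) p + H RLink x x p q + H RNest x x (p+q) q)"

lemma pat_cong: "pat w1 X Y = pat w2 X Y \<Longrightarrow> rcd w1 X Y = rcd w2 X Y \<and> eps w1 X Y = eps w2 X Y"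
  by (simp add: rcd_def eps_def)

lemma filter_eq_replicate: "filter (\<lambda>z. z = X) l = replicate (count_list l X) X"
  by (induction l) auto

lemma filter2_notin: "A \<notin> set l \<Longrightarrow> filter (\<lambda>z. z = X \<or> z = A) l = replicate (count_list l X) X"
  by (induction l) auto

lemma filter2_notin': "A \<notin> set l \<Longrightarrow> filter (\<lambda>z. z = A \<or> z = X) l = replicate (count_list l X) X"
  by (induction l) auto

lemma filter2_none: "A \<notin> set l \<Longrightarrow> B \<notin> set l \<Longrightarrow> filter (\<lambda>z. z = A \<or> z = B) l = []"
  by (induction l) auto

lemma adjAA_not_link: "X \<noteq> A \<Longrightarrow> [X,A,X,A] \<noteq> u @ [A,A] @ v \<and> [A,X,A,X] \<noteq> u @ [A,A] @ v
   \<and> [A,X,X,A] \<noteq> u @ [A,A] @ v"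
  by (cases u; cases v; auto simp: Cons_eq_append_conv append_eq_Cons_conv)

lemma good_H0: "good \<tau> \<phi> g H \<Longrightarrow> c \<noteq> RLink \<Longrightarrow> H c x y p 0 = 0"
  by (cases c) (auto simp: good_def)

lemma good_H0': "good \<tau> \<phi> g H \<Longrightarrow> c \<noteq> RLink \<Longrightarrow> c \<noteq> RNest \<Longrightarrow> H c x y 0 q = 0"
  by (cases c) (auto simp: good_def)

lemma count_notin: "count_list l A = 0 \<Longrightarrow> A \<notin> set l"
  by (simp add: count_list_0_iff)

lemma inv_move1:
  fixes \<phi> :: "'a \<Rightarrow> 'r::comm_ring_1"
  assumes gd: "good \<tau> \<phi> g H" and nw: "nanoword (lab, x @ [A,A] @ y)"
  shows "Inv \<phi> g H (lab, x @ [A,A] @ y) = Inv \<phi> g H (lab, x @ y)"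
proof -
  define w where "w = x @ [A,A] @ y"
  define w' where "w' = x @ y"
  have "count_list w A = 2" using nw by (auto simp: nanoword_def w_def)
  hence cA: "count_list x A = 0" "count_list y A = 0" by (auto simp: w_def)
  hence nA: "A \<notin> set x" "A \<notin> set y" by (auto simp: count_list_0_iff)
  define S where "S = set w'"
  have AS: "A \<notin> S" using nA by (auto simp: S_def w'_def)
  have setw: "set w = insert A S" by (auto simp: S_def w_def w'_def)
  have finS: "finite S" by (simp add: S_def)
  have patS: "pat w X Y = pat w' X Y" if "X \<in> S" "Y \<in> S" for X Y
    using that AS by (auto simp: pat_def w_def w'_def)
  have patXA: "pat w X A = filter (\<lambda>z. z = X) x @ [A,A] @ filter (\<lambda>z. z = X) y" if "X \<noteq> A" for X
    using that nA unfolding pat_def w_def by (auto simp: filter2_notin filter_eq_replicate)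
  have patAX: "pat w A X = filter (\<lambda>z. z = X) x @ [A,A] @ filter (\<lambda>z. z = X) y" if "X \<noteq> A" for X
    using that nA unfolding pat_def w_def by (auto simp: filter2_notin' filter_eq_replicate)
  have ad: "[X,A,X,A] \<noteq> l \<and> [A,X,A,X] \<noteq> l \<and> [A,X,X,A] \<noteq> l"
    if "X \<noteq> A" "l = filter (\<lambda>z. z = X) x @ [A,A] @ filter (\<lambda>z. z = X) y" for X l
    using adjAA_not_link[OF that(1)] that(2) by blast
  have epsXA: "eps w X A = (0::'r)" for X
  proof (cases "X = A")
    case False thus ?thesis using ad[OF False patXA[OF False]] by (auto simp: eps_def)
  qed (simp add: eps_def)
  have epsAX: "eps w A X = (0::'r)" for X
  proof (cases "X = A")
    case False thus ?thesis using ad[OF False patAX[OF False]] by (auto simp: eps_def)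
  qed (simp add: eps_def)
  have codeXA: "rcd w X A \<noteq> RLink" for X
  proof (cases "X = A")
    case False thus ?thesis using ad[OF False patXA[OF False]] by (auto simp: rcd_def)
  qed (simp add: rcd_def)
  have codeAX0: "rcd w A X \<noteq> RLink \<and> rcd w A X \<noteq> RNest" for X
  proof (cases "X = A")
    case False thus ?thesis
      using ad[OF False patAX[OF False]] by (auto simp: rcd_def)
  qed (simp add: rcd_def)
  have codeAX: "rcd w A X \<noteq> RLink" "rcd w A X \<noteq> RNest" for X
    using codeAX0[of X] by auto
  have nvA: "nval \<phi> lab w A = 0" by (simp add: nval_def epsAX)
  have epsS: "eps w X Y = (eps w' X Y :: 'r)" if "X \<in> S" "Y \<in> S" for X Y
    using patS[OF that] pat_cong by blast
  have nvS: "nval \<phi> lab w X = nval \<phi> lab w' X" if "X \<in> S" for X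
  proof -
    have "nval \<phi> lab w X = eps w X A * \<phi> (lab A) + (\<Sum>Y\<in>S. eps w X Y * \<phi> (lab Y))"
      unfolding nval_def setw using finS AS by simp
    also have "\<dots> = (\<Sum>Y\<in>S. eps w' X Y * \<phi> (lab Y))"
      using that by (simp add: epsXA epsS)
    finally show ?thesis by (simp add: nval_def S_def)
  qed
  have codeS: "rcd w X Y = rcd w' X Y" if "X \<in> S" "Y \<in> S" for X Y
    using patS[OF that] pat_cong by blast
  have g1: "(\<Sum>X\<in>set w. g (lab X) (nval \<phi> lab w X)) = (\<Sum>X\<in>set w'. g (lab X) (nval \<phi> lab w' X))"
    unfolding setw using finS AS gd by (simp add: nvA nvS good_def S_def[symmetric])
  have inner: "(\<Sum>Y\<in>set w. H (rcd w X Y) (lab X) (lab Y) (nval \<phi> lab w X) (nval \<phi> lab w Y))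
      = (\<Sum>Y\<in>set w'. H (rcd w' X Y) (lab X) (lab Y) (nval \<phi> lab w' X) (nval \<phi> lab w' Y))"
    if "X \<in> S" for X
    unfolding setw using finS AS that
    by (simp add: nvA nvS codeS good_H0[OF gd codeXA] S_def[symmetric])
  have innerA: "(\<Sum>Y\<in>set w. H (rcd w A Y) (lab A) (lab Y) (nval \<phi> lab w A) (nval \<phi> lab w Y)) = 0"
    by (rule sum.neutral) (simp add: nvA good_H0'[OF gd codeAX])
  have g2: "(\<Sum>X\<in>set w. \<Sum>Y\<in>set w. H (rcd w X Y) (lab X) (lab Y) (nval \<phi> lab w X) (nval \<phi> lab w Y))
      = (\<Sum>X\<in>set w'. \<Sum>Y\<in>set w'. H (rcd w' X Y) (lab X) (lab Y) (nval \<phi> lab w' X) (nval \<phi> lab w' Y))"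
  proof -
    have "(\<Sum>X\<in>set w. \<Sum>Y\<in>set w. H (rcd w X Y) (lab X) (lab Y) (nval \<phi> lab w X) (nval \<phi> lab w Y))
      = (\<Sum>Y\<in>set w. H (rcd w A Y) (lab A) (lab Y) (nval \<phi> lab w A) (nval \<phi> lab w Y))
        + (\<Sum>X\<in>S. \<Sum>Y\<in>set w. H (rcd w X Y) (lab X) (lab Y) (nval \<phi> lab w X) (nval \<phi> lab w Y))"
      unfolding setw[symmetric] using finS AS by (simp add: setw)
    also have "\<dots> = (\<Sum>X\<in>S. \<Sum>Y\<in>set w'. H (rcd w' X Y) (lab X) (lab Y) (nval \<phi> lab w' X) (nval \<phi> lab w' Y))"
      by (simp add: innerA inner)
    finally show ?thesis by (simp add: S_def)
  qed
  show ?thesis using g1 g2 by (simp add: Inv_def w_def w'_def)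
qed


lemma rep3:
  assumes "cx + cy + cz = (2::nat)" "X \<noteq> A" "X \<noteq> B"
  shows "let l1 = replicate cx X @ [A] @ replicate cy X @ [A] @ replicate cz X;
             l2 = replicate cx X @ [B] @ replicate cy X @ [B] @ replicate cz X in
    (l1 = [X,A,X,A] \<longleftrightarrow> l2 = [X,B,X,B]) \<and> (l1 = [A,X,A,X] \<longleftrightarrow> l2 = [B,X,B,X]) \<and>
    (l1 = [X,X,A,A] \<longleftrightarrow> l2 = [X,X,B,B]) \<and> (l1 = [X,A,A,X] \<longleftrightarrow> l2 = [X,B,B,X]) \<and>
    (l1 = [A,A,X,X] \<longleftrightarrow> l2 = [B,B,X,X]) \<and> (l1 = [A,X,X,A] \<longleftrightarrow> l2 = [B,X,X,B])"
proof -
  have "cx \<le> 2" "cy \<le> 2" "cz \<le> 2" using assms(1) by auto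
  then consider "cx = 0 \<and> cy = 0 \<and> cz = 2" | "cx = 0 \<and> cy = 1 \<and> cz = 1" | "cx = 0 \<and> cy = 2 \<and> cz = 0"
    | "cx = 1 \<and> cy = 0 \<and> cz = 1" | "cx = 1 \<and> cy = 1 \<and> cz = 0" | "cx = 2 \<and> cy = 0 \<and> cz = 0"
    using assms(1) by (auto simp: le_Suc_eq numeral_2_eq_2)
  thus ?thesis by cases (use assms in \<open>auto simp: numeral_2_eq_2\<close>)
qed

lemma inv_move2:
  fixes \<phi> :: "'a \<Rightarrow> 'r::comm_ring_1"
  assumes gd: "good \<tau> \<phi> g H" and nw: "nanoword (lab, x @ [A,B] @ y @ [B,A] @ z)"
    and lB: "lab B = \<tau> (lab A)"
  shows "Inv \<phi> g H (lab, x @ [A,B] @ y @ [B,A] @ z) = Inv \<phi> g H (lab, x @ y @ z)"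
proof -
  define w where "w = x @ [A,B] @ y @ [B,A] @ z"
  define w' where "w' = x @ y @ z"
  have cw0: "\<forall>X\<in>set w. count_list w X = 2" using nw unfolding nanoword_def w_def snd_conv .
  have cw: "count_list w X = 2" if "X \<in> set w" for X using cw0 that by blast
  have "count_list w A = 2" by (rule cw) (simp add: w_def)
  hence AB: "A \<noteq> B" and nA: "A \<notin> set x" "A \<notin> set y" "A \<notin> set z"
    by (auto simp: w_def count_list_0_iff split: if_splits)
  have "count_list w B = 2" by (rule cw) (simp add: w_def)
  hence nB: "B \<notin> set x" "B \<notin> set y" "B \<notin> set z" using AB
    by (auto simp: w_def count_list_0_iff split: if_splits)
  define S where "S = set w'"
  have AS: "A \<notin> S" "B \<notin> S" using nA nB by (auto simp: S_def w'_def)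
  have setw: "set w = insert A (insert B S)" by (auto simp: S_def w_def w'_def)
  have finS: "finite S" by (simp add: S_def)
  have patS: "pat w X Y = pat w' X Y" if "X \<in> S" "Y \<in> S" for X Y
    using that AS by (auto simp: pat_def w_def w'_def)
  have epsS: "eps w X Y = (eps w' X Y :: 'r)" if "X \<in> S" "Y \<in> S" for X Y
    using patS[OF that] pat_cong by blast
  have codeS: "rcd w X Y = rcd w' X Y" if "X \<in> S" "Y \<in> S" for X Y
    using patS[OF that] pat_cong by blast
  have XAB: "rcd w X A = rcd w X B \<and> rcd w A X = rcd w B X \<and>
       eps w X A = (eps w X B :: 'r) \<and> eps w A X = (eps w B X :: 'r)" if X: "X \<in> S" for X
  proof -
    have XA: "X \<noteq> A" "X \<noteq> B" using X AS by auto
    have "count_list w X = 2" using X by (intro cw) (auto simp: setw)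
    hence cnt: "count_list x X + count_list y X + count_list z X = 2" using XA by (simp add: w_def)
    have p1: "pat w X A = replicate (count_list x X) X @ [A] @ replicate (count_list y X) X @ [A]
                 @ replicate (count_list z X) X"
      using nA nB XA AB unfolding pat_def w_def by (simp add: filter2_notin)
    have p2: "pat w X B = replicate (count_list x X) X @ [B] @ replicate (count_list y X) X @ [B]
                 @ replicate (count_list z X) X"
      using nA nB XA AB unfolding pat_def w_def by (simp add: filter2_notin)
    have p3: "pat w A X = pat w X A" "pat w B X = pat w X B" by (auto simp: pat_def intro: filter_cong)
    show ?thesis using rep3[OF cnt XA] XA AB unfolding rcd_def eps_def p3 p1 p2 Let_def
      by auto
  qed
  have patAB: "pat w A B = [A,B,B,A]" "pat w B A = [A,B,B,A]"
    using nA nB AB by (auto simp: pat_def w_def filter2_none)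
  have cAB: "rcd w A B = RNest" "rcd w B A = RNone" "rcd w A A = RNone" "rcd w B B = RNone"
    using patAB AB by (auto simp: rcd_def)
  have eAB: "eps w A B = (0::'r)" "eps w B A = (0::'r)" "eps w A A = (0::'r)" "eps w B B = (0::'r)"
    using patAB AB by (auto simp: eps_def)
  have phiB: "\<phi> (lab B) = - \<phi> (lab A)" using gd lB by (simp add: good_def)
  have nvAB: "nval \<phi> lab w B = nval \<phi> lab w A"
    unfolding nval_def setw using finS AS AB XAB by (simp add: eAB)
  have nvS: "nval \<phi> lab w X = nval \<phi> lab w' X" if X: "X \<in> S" for X
  proof -
    have "nval \<phi> lab w X = eps w X A * \<phi> (lab A) + eps w X B * \<phi> (lab B) + (\<Sum>Y\<in>S. eps w X Y * \<phi> (lab Y))"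
      unfolding nval_def setw using finS AS AB by simp
    also have "\<dots> = (\<Sum>Y\<in>S. eps w' X Y * \<phi> (lab Y))"
      using X XAB[OF X] phiB by (simp add: epsS)
    finally show ?thesis by (simp add: nval_def S_def)
  qed
  define s where "s = nval \<phi> lab w A"
  have g1: "(\<Sum>X\<in>set w. g (lab X) (nval \<phi> lab w X)) = (\<Sum>X\<in>set w'. g (lab X) (nval \<phi> lab w' X))"
  proof -
    have "g (lab B) s = - g (lab A) s" using gd lB by (simp add: good_def)
    thus ?thesis unfolding setw using finS AS AB by (simp add: nvAB nvS S_def[symmetric] s_def)
  qed
  define F where "F X Y = H (rcd w X Y) (lab X) (lab Y) (nval \<phi> lab w X) (nval \<phi> lab w Y)" for X Y
  define F' where "F' X Y = H (rcd w' X Y) (lab X) (lab Y) (nval \<phi> lab w' X) (nval \<phi> lab w' Y)" for X Y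
  have Hx: "H r (lab B) y p q = - H r (lab A) y p q" for r y p q using gd lB by (simp add: good_def)
  have Hy: "H r x (lab B) p q = - H r x (lab A) p q" for r x p q using gd lB by (simp add: good_def)
  have h0: "H RNest (lab A) (lab B) s' s' = 0" for s'
    using gd lB unfolding good_def by metis
  have hN: "H RNone x' y' p' q' = 0" for x' y' p' q'
    using gd unfolding good_def by metis
  have FAB: "F A A + F A B + F B A + F B B = 0"
    by (simp add: F_def cAB nvAB h0 hN)
  have FA: "F A Y + F B Y = 0" if "Y \<in> S" for Y
    using XAB[OF that] by (simp add: F_def nvAB Hx)
  have FX: "F X A + F X B = 0" if "X \<in> S" for X
    using XAB[OF that] by (simp add: F_def nvAB Hy)
  have FS: "F X Y = F' X Y" if "X \<in> S" "Y \<in> S" for X Y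
    using that by (simp add: F_def F'_def codeS nvS)
  have "(\<Sum>X\<in>set w. \<Sum>Y\<in>set w. F X Y) = (F A A + F A B + F B A + F B B)
      + (\<Sum>Y\<in>S. F A Y + F B Y) + (\<Sum>X\<in>S. F X A + F X B) + (\<Sum>X\<in>S. \<Sum>Y\<in>S. F X Y)"
    unfolding setw using finS AS AB by (simp add: sum.distrib algebra_simps)
  also have "\<dots> = (\<Sum>X\<in>S. \<Sum>Y\<in>S. F' X Y)" by (simp add: FAB FA FX FS)
  finally have g2: "(\<Sum>X\<in>set w. \<Sum>Y\<in>set w. F X Y) = (\<Sum>X\<in>set w'. \<Sum>Y\<in>set w'. F' X Y)"
    by (simp add: S_def)
  show ?thesis using g1 g2 by (simp add: Inv_def w_def w'_def F_def F'_def)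
qed


lemma rep4:
  assumes "cx + cy + cz + ct = (2::nat)" "D \<noteq> A" "D \<noteq> B" "D \<noteq> C"
    and "pat w A D = replicate cx D @ [A] @ replicate cy D @ [A] @ replicate cz D @ replicate ct D"
    and "pat w B D = replicate cx D @ [B] @ replicate cy D @ replicate cz D @ [B] @ replicate ct D"
    and "pat w C D = replicate cx D @ replicate cy D @ [C] @ replicate cz D @ [C] @ replicate ct D"
  shows "eps w B D = eps w A D + (eps w C D :: 'r::comm_ring_1)"
proof -
  have "cx \<le> 2" "cy \<le> 2" "cz \<le> 2" "ct \<le> 2" using assms(1) by auto
  then consider
      "cx = 0" "cy = 0" "cz = 0" "ct = 2" | "cx = 0" "cy = 0" "cz = 1" "ct = 1" | "cx = 0" "cy = 0" "cz = 2" "ct = 0"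
    | "cx = 0" "cy = 1" "cz = 0" "ct = 1" | "cx = 0" "cy = 1" "cz = 1" "ct = 0" | "cx = 0" "cy = 2" "cz = 0" "ct = 0"
    | "cx = 1" "cy = 0" "cz = 0" "ct = 1" | "cx = 1" "cy = 0" "cz = 1" "ct = 0" | "cx = 1" "cy = 1" "cz = 0" "ct = 0"
    | "cx = 2" "cy = 0" "cz = 0" "ct = 0"
    using assms(1) by (auto simp: le_Suc_eq numeral_2_eq_2)
  thus ?thesis unfolding eps_def assms(5-7) by cases (use assms(2-4) in \<open>auto simp: numeral_2_eq_2\<close>)
qed

lemma inv_move3:
  fixes \<phi> :: "'a \<Rightarrow> 'r::comm_ring_1"
  assumes gd: "good \<tau> \<phi> g H" and nw: "nanoword (lab, x @ [A,B] @ y @ [A,C] @ z @ [B,C] @ t)"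
    and dis: "A \<noteq> B" "B \<noteq> C" "A \<noteq> C" and lb: "lab A = lab B" "lab B = lab C"
  shows "Inv \<phi> g H (lab, x @ [A,B] @ y @ [A,C] @ z @ [B,C] @ t)
       = Inv \<phi> g H (lab, x @ [B,A] @ y @ [C,A] @ z @ [C,B] @ t)"
proof -
  define w where "w = x @ [A,B] @ y @ [A,C] @ z @ [B,C] @ t"
  define w' where "w' = x @ [B,A] @ y @ [C,A] @ z @ [C,B] @ t"
  have cw0: "\<forall>X\<in>set w. count_list w X = 2" using nw unfolding nanoword_def w_def snd_conv .
  have cw: "count_list w X = 2" if "X \<in> set w" for X using cw0 that by blast
  have "count_list w A = 2" by (rule cw) (simp add: w_def)
  hence nA: "A \<notin> set x" "A \<notin> set y" "A \<notin> set z" "A \<notin> set t"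
    using dis by (auto simp: w_def count_list_0_iff split: if_splits)
  have "count_list w B = 2" by (rule cw) (simp add: w_def)
  hence nB: "B \<notin> set x" "B \<notin> set y" "B \<notin> set z" "B \<notin> set t"
    using dis by (auto simp: w_def count_list_0_iff split: if_splits)
  have "count_list w C = 2" by (rule cw) (simp add: w_def)
  hence nC: "C \<notin> set x" "C \<notin> set y" "C \<notin> set z" "C \<notin> set t"
    using dis by (auto simp: w_def count_list_0_iff split: if_splits)
  define S where "S = set (x @ y @ z @ t)"
  have AS: "A \<notin> S" "B \<notin> S" "C \<notin> S" using nA nB nC by (auto simp: S_def)
  define T where "T = {A,B,C}"
  have setw: "set w = T \<union> S" "set w' = T \<union> S" by (auto simp: S_def T_def w_def w'_def)
  have finS: "finite S" "finite T" by (simp_all add: S_def T_def)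
  have TS: "T \<inter> S = {}" using AS by (auto simp: T_def)
  have patS: "pat w X Y = pat w' X Y" if "X \<in> S" "Y \<in> S" for X Y
    using that AS by (auto simp: pat_def w_def w'_def)
  have patST: "pat w X Z = pat w' X Z" "pat w Z X = pat w' Z X" if "X \<in> S" "Z \<in> T" for X Z
    using that AS dis by (auto simp: pat_def w_def w'_def T_def)
  have pats: "pat w A B = [A,B,A,B]" "pat w B A = [A,B,A,B]" "pat w A C = [A,A,C,C]" "pat w C A = [A,A,C,C]"
    "pat w B C = [B,C,B,C]" "pat w C B = [B,C,B,C]"
    "pat w' A B = [B,A,A,B]" "pat w' B A = [B,A,A,B]" "pat w' A C = [A,C,A,C]" "pat w' C A = [A,C,A,C]"
    "pat w' B C = [B,C,C,B]" "pat w' C B = [B,C,C,B]"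
    using nA nB nC dis by (auto simp: pat_def w_def w'_def filter2_none)
  have epsS: "eps w X Y = (eps w' X Y :: 'r)" "rcd w X Y = rcd w' X Y" if "X \<in> S" "Y \<in> S" for X Y
    using patS[OF that] pat_cong by blast+
  have epsST: "eps w X Z = (eps w' X Z :: 'r)" "rcd w X Z = rcd w' X Z"
    "eps w Z X = (eps w' Z X :: 'r)" "rcd w Z X = rcd w' Z X" if "X \<in> S" "Z \<in> T" for X Z
    using patST[OF that] pat_cong by blast+
  have epsT: "eps w A B = (1::'r)" "eps w B A = (-1::'r)" "eps w A C = (0::'r)" "eps w C A = (0::'r)"
     "eps w B C = (1::'r)" "eps w C B = (-1::'r)"
     "eps w' A B = (0::'r)" "eps w' B A = (0::'r)" "eps w' A C = (1::'r)" "eps w' C A = (-1::'r)"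
     "eps w' B C = (0::'r)" "eps w' C B = (0::'r)"
     "eps w A A = (0::'r)" "eps w B B = (0::'r)" "eps w C C = (0::'r)"
     "eps w' A A = (0::'r)" "eps w' B B = (0::'r)" "eps w' C C = (0::'r)"
    using pats dis by (auto simp: eps_def)
  have codeT: "rcd w A B = RLink" "rcd w B A = RNone" "rcd w A C = RDisj" "rcd w C A = RNone"
     "rcd w B C = RLink" "rcd w C B = RNone"
     "rcd w' A B = RNone" "rcd w' B A = RNest" "rcd w' A C = RLink" "rcd w' C A = RNone"
     "rcd w' B C = RNest" "rcd w' C B = RNone"
     "rcd w A A = RNone" "rcd w B B = RNone" "rcd w C C = RNone"
     "rcd w' A A = RNone" "rcd w' B B = RNone" "rcd w' C C = RNone"
    using pats dis by (auto simp: rcd_def)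
  have epsBD: "eps w B D = eps w A D + (eps w C D :: 'r)" if D: "D \<in> S" for D
  proof -
    have DT: "D \<noteq> A" "D \<noteq> B" "D \<noteq> C" using D AS by auto
    have "count_list w D = 2" using D by (intro cw) (auto simp: setw)
    hence cnt: "count_list x D + count_list y D + count_list z D + count_list t D = 2"
      using DT by (simp add: w_def)
    have p: "pat w A D = replicate (count_list x D) D @ [A] @ replicate (count_list y D) D @ [A]
                 @ replicate (count_list z D) D @ replicate (count_list t D) D"
       "pat w B D = replicate (count_list x D) D @ [B] @ replicate (count_list y D) D
                 @ replicate (count_list z D) D @ [B] @ replicate (count_list t D) D"
       "pat w C D = replicate (count_list x D) D @ replicate (count_list y D) D @ [C]
                 @ replicate (count_list z D) D @ [C] @ replicate (count_list t D) D"
      using nA nB nC DT dis unfolding pat_def w_def by (simp_all add: filter2_notin')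
    show ?thesis by (rule rep4[OF cnt DT p])
  qed
  have phiS: "\<And>h. (\<Sum>Y\<in>T \<union> S. h Y) = h A + h B + h C + (\<Sum>Y\<in>S. h Y :: 'r)"
    using finS TS AS dis by (simp add: T_def sum.union_disjoint)
  define SA where "SA Z = (\<Sum>Y\<in>S. eps w Z Y * \<phi> (lab Y))" for Z
  have SA': "(\<Sum>Y\<in>S. eps w' Z Y * \<phi> (lab Y)) = SA Z" if "Z \<in> T" for Z
    unfolding SA_def by (rule sum.cong) (use epsST that in auto)
  have nvw: "nval \<phi> lab w A = SA A + \<phi> (lab A)" "nval \<phi> lab w B = SA B"
     "nval \<phi> lab w C = SA C - \<phi> (lab A)"
    unfolding nval_def setw phiS SA_def using lb by (simp_all add: epsT)
  have nvw': "nval \<phi> lab w' A = SA A + \<phi> (lab A)" "nval \<phi> lab w' B = SA B"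
     "nval \<phi> lab w' C = SA C - \<phi> (lab A)"
    unfolding nval_def setw phiS using lb by (simp_all add: epsT SA' T_def)
  have SAB: "SA B = SA A + SA C"
    unfolding SA_def by (simp add: epsBD sum.distrib algebra_simps)
  have nvS: "nval \<phi> lab w X = nval \<phi> lab w' X" if X: "X \<in> S" for X
    unfolding nval_def setw phiS using X by (simp add: epsST epsS T_def)
  have nvT: "nval \<phi> lab w Z = nval \<phi> lab w' Z" if "Z \<in> T" for Z
    using that nvw nvw' by (auto simp: T_def)
  have nvall: "nval \<phi> lab w X = nval \<phi> lab w' X" if "X \<in> T \<union> S" for X
    using that nvS nvT by blast
  have g1: "(\<Sum>X\<in>set w. g (lab X) (nval \<phi> lab w X)) = (\<Sum>X\<in>set w'. g (lab X) (nval \<phi> lab w' X))"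
    unfolding setw by (rule sum.cong) (simp_all add: nvall)
  define F where "F X Y = H (rcd w X Y) (lab X) (lab Y) (nval \<phi> lab w X) (nval \<phi> lab w Y)" for X Y
  define F' where "F' X Y = H (rcd w' X Y) (lab X) (lab Y) (nval \<phi> lab w' X) (nval \<phi> lab w' Y)" for X Y
  have split: "\<And>G. (\<Sum>X\<in>T \<union> S. \<Sum>Y\<in>T \<union> S. G X Y) = (\<Sum>X\<in>T. \<Sum>Y\<in>T. G X Y) + (\<Sum>X\<in>T. \<Sum>Y\<in>S. G X Y)
        + (\<Sum>X\<in>S. \<Sum>Y\<in>T. G X Y) + (\<Sum>X\<in>S. \<Sum>Y\<in>S. G X Y :: 'r)"
    using finS TS by (simp add: sum.union_disjoint sum.distrib algebra_simps)
  have e1: "(\<Sum>X\<in>T. \<Sum>Y\<in>S. F X Y) = (\<Sum>X\<in>T. \<Sum>Y\<in>S. F' X Y)"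
    by (intro sum.cong refl) (simp add: F_def F'_def epsST nvS nvT)
  have e2: "(\<Sum>X\<in>S. \<Sum>Y\<in>T. F X Y) = (\<Sum>X\<in>S. \<Sum>Y\<in>T. F' X Y)"
    by (intro sum.cong refl) (simp add: F_def F'_def epsST nvS nvT)
  have e3: "(\<Sum>X\<in>S. \<Sum>Y\<in>S. F X Y) = (\<Sum>X\<in>S. \<Sum>Y\<in>S. F' X Y)"
    by (intro sum.cong refl) (simp add: F_def F'_def epsS nvS)
  have hN: "H RNone x' y' p' q' = 0" for x' y' p' q'
    using gd unfolding good_def by metis
  have H3: "H RLink x' x' p (p+q) + H RDisj x' x' p q + H RLink x' x' (p+q) q
              = H RNest x' x' (p+q) p + H RLink x' x' p q + H RNest x' x' (p+q) q" for x' p q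
    using gd unfolding good_def by metis
  have e0: "(\<Sum>X\<in>T. \<Sum>Y\<in>T. F X Y) = (\<Sum>X\<in>T. \<Sum>Y\<in>T. F' X Y)"
  proof -
    have L: "(\<Sum>X\<in>T. \<Sum>Y\<in>T. F X Y) = H RLink (lab A) (lab A) (nval \<phi> lab w A) (nval \<phi> lab w B)
        + H RDisj (lab A) (lab A) (nval \<phi> lab w A) (nval \<phi> lab w C)
        + H RLink (lab A) (lab A) (nval \<phi> lab w B) (nval \<phi> lab w C)"
      using dis lb by (simp add: T_def F_def codeT hN)
    have R: "(\<Sum>X\<in>T. \<Sum>Y\<in>T. F' X Y) = H RNest (lab A) (lab A) (nval \<phi> lab w B) (nval \<phi> lab w A)
        + H RLink (lab A) (lab A) (nval \<phi> lab w A) (nval \<phi> lab w C)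
        + H RNest (lab A) (lab A) (nval \<phi> lab w B) (nval \<phi> lab w C)"
      using dis lb nvT by (simp add: T_def F'_def codeT hN)
    have nB: "nval \<phi> lab w B = nval \<phi> lab w A + nval \<phi> lab w C" using nvw SAB by simp
    show ?thesis unfolding L R nB using H3 by simp
  qed
  have g2: "(\<Sum>X\<in>set w. \<Sum>Y\<in>set w. F X Y) = (\<Sum>X\<in>set w'. \<Sum>Y\<in>set w'. F' X Y)"
    unfolding setw split using e0 e1 e2 e3 by simp
  show ?thesis using g1 g2 by (simp add: Inv_def w_def w'_def F_def F'_def)
qed


lemma inv_iso:
  fixes \<phi> :: "'a \<Rightarrow> 'r::comm_ring_1"
  assumes inj: "inj_on f (set w)" and lb: "\<forall>x\<in>set w. lab' (f x) = lab x"
  shows "Inv \<phi> g H (lab, w) = Inv \<phi> g H (lab', map f w)"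
proof -
  have patf: "pat (map f w) (f X) (f Y) = map f (pat w X Y)" if "X \<in> set w" "Y \<in> set w" for X Y
  proof -
    have "filter (\<lambda>z. f z = f X \<or> f z = f Y) w = filter (\<lambda>z. z = X \<or> z = Y) w"
      by (rule filter_cong) (use inj that in \<open>auto dest: inj_onD\<close>)
    thus ?thesis by (simp add: pat_def filter_map o_def)
  qed
  have mapeq: "map f l = map f l' \<longleftrightarrow> l = l'" if "set l \<subseteq> set w" "set l' \<subseteq> set w" for l l'
    using inj_on_map_eq_map[of f l l'] inj that by (meson inj_on_subset le_sup_iff)
  have fneq: "f X = f Y \<longleftrightarrow> X = Y" if "X \<in> set w" "Y \<in> set w" for X Y
    using inj that by (auto dest: inj_onD)
  have subp: "set (pat w X Y) \<subseteq> set w" for X Y by (auto simp: pat_def)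
  have codef: "rcd (map f w) (f X) (f Y) = rcd w X Y" "eps (map f w) (f X) (f Y) = (eps w X Y :: 'r)"
    if "X \<in> set w" "Y \<in> set w" for X Y
  proof -
    have m: "[f X, f Y, f X, f Y] = map f [X,Y,X,Y]" "[f X, f X, f Y, f Y] = map f [X,X,Y,Y]"
      "[f X, f Y, f Y, f X] = map f [X,Y,Y,X]" "[f Y, f X, f Y, f X] = map f [Y,X,Y,X]" by simp_all
    have s: "set [X,Y,X,Y] \<subseteq> set w" "set [X,X,Y,Y] \<subseteq> set w" "set [X,Y,Y,X] \<subseteq> set w"
      "set [Y,X,Y,X] \<subseteq> set w" using that by auto
    show "rcd (map f w) (f X) (f Y) = rcd w X Y" "eps (map f w) (f X) (f Y) = (eps w X Y :: 'r)"
      unfolding rcd_def eps_def patf[OF that] m fneq[OF that]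
      by (simp_all only: mapeq[OF subp s(1)] mapeq[OF subp s(2)] mapeq[OF subp s(3)] mapeq[OF subp s(4)])
  qed
  have setm: "set (map f w) = f ` set w" by simp
  have nvf: "nval \<phi> lab' (map f w) (f X) = nval \<phi> lab w X" if "X \<in> set w" for X
    unfolding nval_def setm using inj that lb by (simp add: sum.reindex codef)
  show ?thesis unfolding Inv_def fst_conv snd_conv setm
    using inj lb by (simp add: sum.reindex nvf codef)
qed

lemma hstep_inv:
  fixes \<phi> :: "'a \<Rightarrow> 'r::comm_ring_1"
  assumes gd: "good \<tau> \<phi> g H" and st: "nw_hstep \<tau> u v"
  shows "Inv \<phi> g H u = Inv \<phi> g H v"
proof -
  have mv: "Inv \<phi> g H u = Inv \<phi> g H v" if "nanoword u" "nw_move \<tau> u v" for u v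
  proof -
    obtain lab w where u: "u = (lab, w)" by (cases u)
    obtain lab2 w2 where v: "v = (lab2, w2)" by (cases v)
    have l2: "lab2 = lab" using that(2) by (simp add: nw_move_def u v)
    from that(2) consider (m1) x y A where "w = x @ [A, A] @ y" "w2 = x @ y"
      | (m2) x y z A B where "w = x @ [A, B] @ y @ [B, A] @ z" "w2 = x @ y @ z" "lab B = \<tau> (lab A)"
      | (m3) x y z t A B C where "A \<noteq> B" "B \<noteq> C" "A \<noteq> C" "lab A = lab B" "lab B = lab C"
          "w = x @ [A, B] @ y @ [A, C] @ z @ [B, C] @ t" "w2 = x @ [B, A] @ y @ [C, A] @ z @ [C, B] @ t"
      unfolding nw_move_def u v by auto
    thus ?thesis
    proof cases
      case m1 thus ?thesis using inv_move1[OF gd] that(1) by (simp add: u v l2)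
    next
      case m2 thus ?thesis using inv_move2[OF gd] that(1) by (simp add: u v l2)
    next
      case m3 thus ?thesis using inv_move3[OF gd] that(1) by (simp add: u v l2)
    qed
  qed
  have iso: "Inv \<phi> g H u = Inv \<phi> g H v" if "nw_iso u v"
  proof -
    obtain lab w where u: "u = (lab, w)" by (cases u)
    obtain lab2 w2 where v: "v = (lab2, w2)" by (cases v)
    from that obtain f where "inj_on f (set w)" "map f w = w2" "\<forall>x\<in>set w. lab2 (f x) = lab x"
      unfolding nw_iso_def u v by auto
    thus ?thesis using inv_iso[of f w lab2 lab \<phi> g H] by (simp add: u v)
  qed
  from st show ?thesis unfolding nw_hstep_def using mv iso by metis
qed

lemma homotopic_inv:
  fixes \<phi> :: "'a \<Rightarrow> 'r::comm_ring_1"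
  assumes gd: "good \<tau> \<phi> g H" and h: "homotopic \<tau> u v"
  shows "Inv \<phi> g H u = Inv \<phi> g H v"
proof -
  have "(nw_hstep \<tau>)\<^sup>*\<^sup>* u v" using h by (simp add: homotopic_def)
  thus ?thesis
    by (induction rule: rtranclp_induct) (auto dest: hstep_inv[OF gd])
qed


lemma good_zero: "good \<tau> \<phi> g H \<Longrightarrow> H RNone x y p q = 0" "good \<tau> \<phi> g H \<Longrightarrow> g x 0 = 0"
  by (auto simp: good_def)

lemma sum3: "(\<Sum>X\<in>{0::nat,1,2}. f X) = f 0 + f 1 + (f 2 :: 'r::comm_monoid_add)"
  by (simp add: add.assoc)

lemma wabc_set: "set (snd (wabc i a b c)) = {0,1,2}"
  by (auto simp: wabc_def)

lemma wabc_explicit: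
  fixes \<phi> :: "'a \<Rightarrow> 'r::comm_ring_1"
  assumes gd: "good \<tau> \<phi> g H"
  shows
  "Inv \<phi> g H (wabc 1 a b c) = g a (\<phi> b + \<phi> c) + g b (\<phi> c - \<phi> a) + g c (- \<phi> a - \<phi> b)
     + H RLink a b (\<phi> b + \<phi> c) (\<phi> c - \<phi> a) + H RLink a c (\<phi> b + \<phi> c) (- \<phi> a - \<phi> b)
     + H RLink b c (\<phi> c - \<phi> a) (- \<phi> a - \<phi> b)"
  "Inv \<phi> g H (wabc 2 a b c) = g a (\<phi> b + \<phi> c) + g b (- \<phi> a) + g c (- \<phi> a)
     + H RLink a b (\<phi> b + \<phi> c) (- \<phi> a) + H RLink a c (\<phi> b + \<phi> c) (- \<phi> a)
     + H RNest b c (- \<phi> a) (- \<phi> a)"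
  "Inv \<phi> g H (wabc 3 a b c) = g a (\<phi> c) + g b (\<phi> c) + g c (- \<phi> a - \<phi> b)
     + H RNest a b (\<phi> c) (\<phi> c) + H RLink a c (\<phi> c) (- \<phi> a - \<phi> b)
     + H RLink b c (\<phi> c) (- \<phi> a - \<phi> b)"
  "Inv \<phi> g H (wabc 4 a b c) = g b (\<phi> c) + g c (- \<phi> b)
     + H RNest a b 0 (\<phi> c) + H RNest a c 0 (- \<phi> b)
     + H RLink b c (\<phi> c) (- \<phi> b)"
  "Inv \<phi> g H (wabc 5 a b c) = g a (\<phi> b) + g b (\<phi> c - \<phi> a) + g c (- \<phi> b)
     + H RLink a b (\<phi> b) (\<phi> c - \<phi> a) + H RDisj a c (\<phi> b) (- \<phi> b)
     + H RLink b c (\<phi> c - \<phi> a) (- \<phi> b)"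
  using good_zero[OF gd]
  unfolding Inv_def nval_def wabc_set sum3
  by (simp_all add: wabc_def eps_def rcd_def pat_def lab3_def algebra_simps)


lemma len_cases:
  assumes "length w < 6" "even (length w)"
  obtains "w = []" | p q where "w = [p,q]" | p q r s where "w = [p,q,r,s]"
proof -
  have "length w = 0 \<or> length w = 2 \<or> length w = 4"
    using assms by presburger
  moreover have "length w = 2 \<Longrightarrow> \<exists>p q. w = [p,q]" by (auto simp: length_Suc_conv numeral_eq_Suc)
  moreover have "length w = 4 \<Longrightarrow> \<exists>p q r s. w = [p,q,r,s]" by (auto simp: length_Suc_conv numeral_eq_Suc)
  ultimately show ?thesis using that by auto
qed

lemma nanoword_even:
  assumes nw: "nanoword (lab, w)"
  shows "even (length w)"
proof -
  have c: "\<forall>x\<in>set w. count_list w x = 2" using nw by (simp add: nanoword_def)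
  have "length w = sum (count_list w) (set w)" by (simp add: sum_count_set)
  also have "\<dots> = sum (\<lambda>_. 2) (set w)" using c by (intro sum.cong) auto
  also have "\<dots> = 2 * card (set w)" by simp
  finally show ?thesis by simp
qed

lemma t1: "count_list [p,q,r,s::nat] p = 2 \<Longrightarrow> q = p \<Longrightarrow> r \<noteq> p \<and> s \<noteq> p" by (auto split: if_splits)
lemma t2: "count_list [p,q,r,s::nat] r = 2 \<Longrightarrow> q = p \<Longrightarrow> r \<noteq> p \<Longrightarrow> s \<noteq> p \<Longrightarrow> r = s" by (auto split: if_splits)
lemma t3: "count_list [p,q,r,s::nat] p = 2 \<Longrightarrow> q \<noteq> p \<Longrightarrow> r = p \<or> s = p" by (auto split: if_splits)
lemma t4: "count_list [p,q,r,s::nat] q = 2 \<Longrightarrow> q \<noteq> p \<Longrightarrow> r = p \<Longrightarrow> s = q" by (auto split: if_splits)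
lemma t5: "count_list [p,q,r,s::nat] q = 2 \<Longrightarrow> q \<noteq> p \<Longrightarrow> s = p \<Longrightarrow> r = q" by (auto split: if_splits)
lemma t6: "count_list [p,q::nat] p = 2 \<Longrightarrow> q = p" by (auto split: if_splits)

lemma short_shapes:
  assumes nw: "nanoword (lab, w)" and len: "length w < 6"
  shows "w = [] \<or> (\<exists>A. w = [A,A]) \<or> (\<exists>A B. A \<noteq> B \<and> (w = [A,A,B,B] \<or> w = [A,B,B,A] \<or> w = [A,B,A,B]))"
proof -
  have c: "\<forall>x\<in>set w. count_list w x = 2" using nw by (simp add: nanoword_def)
  from len nanoword_even[OF nw] show ?thesis
  proof (cases rule: len_cases)
    case 1 thus ?thesis by simp
  next
    case (2 p q)
    have "count_list [p,q] p = 2" using c 2 by simp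
    hence "q = p" by (rule t6)
    thus ?thesis using 2 by simp
  next
    case (3 p q r s)
    have cp: "count_list [p,q,r,s] p = 2" and cq: "count_list [p,q,r,s] q = 2"
      and cr: "count_list [p,q,r,s] r = 2"
      using c 3 by simp_all
    show ?thesis
    proof (cases "q = p")
      case True
      have rp: "r \<noteq> p" "s \<noteq> p" using t1[OF cp True] by auto
      have "r = s" using t2[OF cr True rp] .
      hence "w = [p,p,r,r] \<and> p \<noteq> r" using 3 True rp by simp
      thus ?thesis by blast
    next
      case False
      from t3[OF cp False] show ?thesis
      proof
        assume rp: "r = p" hence "s = q" using t4[OF cq False] by simp
        hence "w = [p,q,p,q] \<and> p \<noteq> q" using 3 rp False by simp
        thus ?thesis by blast
      next
        assume sp: "s = p" hence "r = q" using t5[OF cq False] by simp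
        hence "w = [p,q,q,p] \<and> p \<noteq> q" using 3 sp False by simp
        thus ?thesis by blast
      qed
    qed
  qed
qed

lemma sum2: "A \<noteq> B \<Longrightarrow> (\<Sum>X\<in>{A,B}. f X) = f A + (f B :: 'r::comm_monoid_add)"
  by simp

lemma short_inv:
  fixes \<phi> :: "'a \<Rightarrow> 'r::comm_ring_1"
  assumes gd: "good \<tau> \<phi> g H" and nw: "nanoword v" and len: "length (snd v) < 6"
  shows "Inv \<phi> g H v = 0 \<or> (\<exists>x y. Inv \<phi> g H v = g x (\<phi> y) + g y (- \<phi> x) + H RLink x y (\<phi> y) (- \<phi> x))"
proof -
  obtain lab w where v: "v = (lab, w)" by (cases v)
  have z: "H RNone x y p q = 0" "g x 0 = 0" "H RNest x y p 0 = 0" "H RDisj x y 0 q = 0" for x y p q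
    using gd by (auto simp: good_def)
  have sh: "w = [] \<or> (\<exists>A. w = [A,A]) \<or> (\<exists>A B. A \<noteq> B \<and> (w = [A,A,B,B] \<or> w = [A,B,B,A] \<or> w = [A,B,A,B]))"
    using short_shapes[of lab w] nw len unfolding v by simp
  consider "w = []" | A where "w = [A,A]" | A B where "A \<noteq> B" "w = [A,A,B,B]"
    | A B where "A \<noteq> B" "w = [A,B,B,A]" | A B where "A \<noteq> B" "w = [A,B,A,B]"
    using sh by blast
  thus ?thesis
  proof cases
    case 1 thus ?thesis by (simp add: v Inv_def)
  next
    case (2 A)
    have s: "set w = {A}" using 2 by auto
    show ?thesis unfolding v Inv_def fst_conv snd_conv s nval_def
      by (simp add: z eps_def rcd_def)
  next
    case (3 A B)
    have s: "set w = {A,B}" using 3 by auto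
    have p: "pat w A B = [A,A,B,B]" "pat w B A = [A,A,B,B]" "pat w A A = [A,A]" "pat w B B = [B,B]"
      using 3 by (auto simp: pat_def)
    have e: "eps w A B = (0::'r)" "eps w B A = (0::'r)" "eps w A A = (0::'r)" "eps w B B = (0::'r)"
      using 3(1) by (simp_all add: eps_def p)
    have cd: "rcd w A B = RDisj" "rcd w B A = RNone" "rcd w A A = RNone" "rcd w B B = RNone"
      using 3(1) by (simp_all add: rcd_def p)
    have nv: "nval \<phi> lab w A = 0" "nval \<phi> lab w B = 0"
      unfolding nval_def s using 3(1) by (simp_all add: e)
    have "Inv \<phi> g H v = 0"
      unfolding v Inv_def fst_conv snd_conv s using 3(1) by (simp add: nv cd z)
    thus ?thesis by simp
  next
    case (4 A B)
    have s: "set w = {A,B}" using 4 by auto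
    have p: "pat w A B = [A,B,B,A]" "pat w B A = [A,B,B,A]" "pat w A A = [A,A]" "pat w B B = [B,B]"
      using 4 by (auto simp: pat_def)
    have e: "eps w A B = (0::'r)" "eps w B A = (0::'r)" "eps w A A = (0::'r)" "eps w B B = (0::'r)"
      using 4(1) by (simp_all add: eps_def p)
    have cd: "rcd w A B = RNest" "rcd w B A = RNone" "rcd w A A = RNone" "rcd w B B = RNone"
      using 4(1) by (simp_all add: rcd_def p)
    have nv: "nval \<phi> lab w A = 0" "nval \<phi> lab w B = 0"
      unfolding nval_def s using 4(1) by (simp_all add: e)
    have "Inv \<phi> g H v = 0"
      unfolding v Inv_def fst_conv snd_conv s using 4(1) by (simp add: nv cd z)
    thus ?thesis by simp
  next
    case (5 A B)
    have s: "set w = {A,B}" using 5 by auto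
    have p: "pat w A B = [A,B,A,B]" "pat w B A = [A,B,A,B]" "pat w A A = [A,A]" "pat w B B = [B,B]"
      using 5 by (auto simp: pat_def)
    have e: "eps w A B = (1::'r)" "eps w B A = (-1::'r)" "eps w A A = (0::'r)" "eps w B B = (0::'r)"
      using 5(1) by (simp_all add: eps_def p)
    have cd: "rcd w A B = RLink" "rcd w B A = RNone" "rcd w A A = RNone" "rcd w B B = RNone"
      using 5(1) by (simp_all add: rcd_def p)
    have nv: "nval \<phi> lab w A = \<phi> (lab B)" "nval \<phi> lab w B = - \<phi> (lab A)"
      unfolding nval_def s using 5(1) by (simp_all add: e)
    have "Inv \<phi> g H v = g (lab A) (\<phi> (lab B)) + g (lab B) (- \<phi> (lab A)) + H RLink (lab A) (lab B) (\<phi> (lab B)) (- \<phi> (lab A))"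
      unfolding v Inv_def fst_conv snd_conv s using 5(1) by (simp add: nv cd z)
    thus ?thesis by blast
  qed
qed


definition oddf :: "('a \<Rightarrow> 'a) \<Rightarrow> ('a \<Rightarrow> 'r::comm_ring_1) \<Rightarrow> bool" where
  "oddf \<tau> f \<longleftrightarrow> (\<forall>x. f (\<tau> x) = - f x)"

definition gJ :: "('a \<Rightarrow> 'r) \<Rightarrow> 'r \<Rightarrow> 'a \<Rightarrow> 'r \<Rightarrow> 'r::comm_ring_1" where
  "gJ \<psi> k z s = (if s = k then \<psi> z else 0)"

definition H0 :: "rcode \<Rightarrow> 'a \<Rightarrow> 'a \<Rightarrow> 'r \<Rightarrow> 'r \<Rightarrow> 'r::comm_ring_1" where
  "H0 r x y p q = 0"

definition g0 :: "'a \<Rightarrow> 'r \<Rightarrow> 'r::comm_ring_1" where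
  "g0 z s = 0"

definition HN :: "('a \<Rightarrow> 'a) \<Rightarrow> ('a \<Rightarrow> 'r) \<Rightarrow> ('a \<Rightarrow> 'r) \<Rightarrow> 'r \<Rightarrow> rcode \<Rightarrow> 'a \<Rightarrow> 'a \<Rightarrow> 'r \<Rightarrow> 'r \<Rightarrow> 'r::comm_ring_1" where
  "HN \<tau> \<psi>1 \<psi>2 k r x y P Q = (if r = RNest \<and> x \<noteq> y \<and> x \<noteq> \<tau> y \<and> Q = k then \<psi>1 x * \<psi>2 y else 0)"

definition HL :: "('a \<Rightarrow> 'a) \<Rightarrow> ('a \<Rightarrow> 'r) \<Rightarrow> ('a \<Rightarrow> 'r) \<Rightarrow> rcode \<Rightarrow> 'a \<Rightarrow> 'a \<Rightarrow> 'r \<Rightarrow> 'r \<Rightarrow> 'r::comm_ring_1" where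
  "HL \<tau> \<psi>1 \<psi>2 r x y P Q = (if r = RLink \<and> x \<noteq> y \<and> x \<noteq> \<tau> y \<and> Q = 0 \<and> P \<noteq> 0 then \<psi>1 x * \<psi>2 y else 0)"

definition HND :: "('a \<Rightarrow> 'r) \<Rightarrow> rcode \<Rightarrow> 'a \<Rightarrow> 'a \<Rightarrow> 'r \<Rightarrow> 'r \<Rightarrow> 'r::comm_ring_1" where
  "HND \<psi> r x y P Q = (if r = RNest then \<psi> x * \<psi> y * Q * (P - Q)
      else if r = RDisj then 2 * \<psi> x * \<psi> y * P * Q else 0)"

lemma goodJ:
  assumes "oddf \<tau> \<phi>" "oddf \<tau> \<psi>" "k \<noteq> 0"
  shows "good \<tau> \<phi> (gJ \<psi> k) H0"
  using assms by (simp add: good_def oddf_def gJ_def H0_def)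

lemma goodN:
  assumes inv: "\<And>x. \<tau> (\<tau> x) = x" and "oddf \<tau> \<phi>" "oddf \<tau> \<psi>1" "oddf \<tau> \<psi>2" "k \<noteq> 0"
  shows "good \<tau> \<phi> g0 (HN \<tau> \<psi>1 \<psi>2 k)"
proof -
  have e: "(\<tau> x \<noteq> y \<and> \<tau> x \<noteq> \<tau> y) \<longleftrightarrow> (x \<noteq> y \<and> x \<noteq> \<tau> y)" for x y
    using inv by metis
  have i: "\<tau> x = \<tau> y \<longleftrightarrow> x = y" for x y using inv by metis
  show ?thesis using assms e i by (auto simp: good_def oddf_def g0_def HN_def)
qed

lemma goodL:
  assumes inv: "\<And>x. \<tau> (\<tau> x) = x" and "oddf \<tau> \<phi>" "oddf \<tau> \<psi>1" "oddf \<tau> \<psi>2"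
  shows "good \<tau> \<phi> g0 (HL \<tau> \<psi>1 \<psi>2)"
proof -
  have e: "(\<tau> x \<noteq> y \<and> \<tau> x \<noteq> \<tau> y) \<longleftrightarrow> (x \<noteq> y \<and> x \<noteq> \<tau> y)" for x y
    using inv by metis
  have i: "\<tau> x = \<tau> y \<longleftrightarrow> x = y" for x y using inv by metis
  show ?thesis using assms e i by (auto simp: good_def oddf_def g0_def HL_def)
qed

lemma goodND:
  assumes "oddf \<tau> \<phi>" "oddf \<tau> \<psi>"
  shows "good \<tau> \<phi> g0 (HND \<psi>)"
  using assms by (simp add: good_def oddf_def g0_def HND_def algebra_simps)

lemma shortJ:
  assumes "oddf \<tau> \<phi>" "\<And>z. k \<noteq> \<phi> z"
  shows "gJ \<psi> k x (\<phi> y) + gJ \<psi> k y (- \<phi> x) + H0 RLink x y (\<phi> y) (- \<phi> x) = 0"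
proof -
  have "- \<phi> x = \<phi> (\<tau> x)" using assms(1) by (simp add: oddf_def)
  thus ?thesis using assms(2) by (simp add: gJ_def H0_def) (metis assms(2))
qed

lemma shortN: "g0 x (\<phi> y) + g0 y (- \<phi> x) + HN \<tau> \<psi>1 \<psi>2 k RLink x y (\<phi> y) (- \<phi> x) = 0"
  by (simp add: g0_def HN_def)

lemma shortL: "\<phi> x \<noteq> 0 \<Longrightarrow> g0 x (\<phi> y) + g0 y (- \<phi> x) + HL \<tau> \<psi>1 \<psi>2 RLink x y (\<phi> y) (- \<phi> x) = 0"
  by (simp add: g0_def HL_def)

lemma shortND: "g0 x (\<phi> y) + g0 y (- \<phi> x) + HND \<psi> RLink x y (\<phi> y) (- \<phi> x) = 0"
  by (simp add: g0_def HND_def)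

definition U :: "('a \<Rightarrow> 'a) \<Rightarrow> 'a \<Rightarrow> 'a \<Rightarrow> 6" where
  "U \<tau> z = (\<lambda>u. if u = z then (if \<tau> z = z then 3 else 1) else if u = \<tau> z then -1 else 0)"

definition sc :: "('a \<Rightarrow> 'a) \<Rightarrow> 'a \<Rightarrow> 'a \<Rightarrow> 'a \<Rightarrow> 6" where
  "sc \<tau> p z = (\<lambda>_. U \<tau> z p)"

lemma U_odd:
  assumes inv: "\<And>x. \<tau> (\<tau> x) = x"
  shows "oddf \<tau> (U \<tau>)"
  unfolding oddf_def
proof
  fix z
  show "U \<tau> (\<tau> z) = - U \<tau> z"
  proof
    fix u
    show "U \<tau> (\<tau> z) u = (- U \<tau> z) u"
      using inv[of z] by (cases "\<tau> z = z") (auto simp: U_def)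
  qed
qed

lemma sc_odd:
  assumes inv: "\<And>x. \<tau> (\<tau> x) = x"
  shows "oddf \<tau> (sc \<tau> p)"
  using U_odd[OF inv] unfolding oddf_def sc_def by (auto simp: fun_eq_iff)

lemma U_at: "U \<tau> z z = (if \<tau> z = z then 3 else 1)" "u \<noteq> z \<Longrightarrow> u \<noteq> \<tau> z \<Longrightarrow> U \<tau> z u = 0"
  "\<tau> z \<noteq> z \<Longrightarrow> U \<tau> z (\<tau> z) = -1"
  by (auto simp: U_def)

lemma U_nz: "U \<tau> z \<noteq> 0"
proof
  assume "U \<tau> z = 0"
  hence "U \<tau> z z = 0" by simp
  thus False by (simp add: U_def split: if_splits)
qed


lemma U_inj:
  assumes inv: "\<And>x. \<tau> (\<tau> x) = x" and e: "U \<tau> x = U \<tau> y"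
  shows "x = y"
proof (rule ccontr)
  assume ne: "x \<noteq> y"
  have "U \<tau> x x = U \<tau> y x" using e by simp
  thus False using ne inv[of y] inv[of x] by (auto simp: U_def split: if_splits)
qed

lemma TWO:
  assumes inv: "\<And>x. \<tau> (\<tau> x) = x" and ne: "y \<noteq> \<tau> x"
  shows "U \<tau> x + U \<tau> y \<noteq> 0" "U \<tau> x + U \<tau> y \<noteq> U \<tau> z"
proof -
  have od: "U \<tau> (\<tau> x) = - U \<tau> x" using U_odd[OF inv] by (simp add: oddf_def)
  show "U \<tau> x + U \<tau> y \<noteq> 0"
  proof
    assume "U \<tau> x + U \<tau> y = 0"
    hence "U \<tau> y = U \<tau> (\<tau> x)" by (simp add: od eq_neg_iff_add_eq_0 add.commute)
    thus False using U_inj[OF inv] ne by blast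
  qed
  show "U \<tau> x + U \<tau> y \<noteq> U \<tau> z"
  proof
    assume e: "U \<tau> x + U \<tau> y = U \<tau> z"
    have ex: "U \<tau> x x + U \<tau> y x = U \<tau> z x" and ey: "U \<tau> x y + U \<tau> y y = U \<tau> z y"
      using fun_cong[OF e, of x] fun_cong[OF e, of y] by simp_all
    show False
    proof (cases "y = x")
      case True
      thus False using ex ne inv[of x] inv[of z] by (auto simp: U_def split: if_splits)
    next
      case False
      have x1: "x \<noteq> \<tau> y" using ne inv[of y] by metis
      have "U \<tau> y x = 0" using False x1 by (simp add: U_def)
      hence zx: "U \<tau> z x \<noteq> 0" using ex by (simp add: U_def split: if_splits)
      have "U \<tau> x y = 0" using False ne by (simp add: U_def)
      hence zy: "U \<tau> z y \<noteq> 0" using ey by (simp add: U_def split: if_splits)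
      from zx have "x = z \<or> x = \<tau> z" by (auto simp: U_def split: if_splits)
      moreover from zy have "y = z \<or> y = \<tau> z" by (auto simp: U_def split: if_splits)
      ultimately show False using False ne x1 inv[of z] by auto
    qed
  qed
qed

lemma U_neg: assumes inv: "\<And>x. \<tau> (\<tau> x) = x" shows "- U \<tau> x = U \<tau> (\<tau> x)"
  using U_odd[OF inv] by (simp add: oddf_def)


definition sep :: "('a \<Rightarrow> 'a) \<Rightarrow> 'a nanoword \<Rightarrow> bool" where
  "sep \<tau> u \<longleftrightarrow> (\<exists>(\<phi> :: 'a \<Rightarrow> 'a \<Rightarrow> 6) g H. good \<tau> \<phi> g H
     \<and> (\<forall>x y. g x (\<phi> y) + g y (- \<phi> x) + H RLink x y (\<phi> y) (- \<phi> x) = 0) \<and> Inv \<phi> g H u \<noteq> 0)"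

lemma sepJ:
  assumes inv: "\<And>x. \<tau> (\<tau> x) = x" and "oddf \<tau> \<psi>" "k \<noteq> 0" "\<And>z. k \<noteq> U \<tau> z"
    and "Inv (U \<tau>) (gJ \<psi> k) H0 u \<noteq> 0"
  shows "sep \<tau> u"
  unfolding sep_def
  apply (rule exI[of _ "U \<tau>"], rule exI[of _ "gJ \<psi> k"], rule exI[of _ H0])
  using goodJ[OF U_odd[OF inv] assms(2,3)] shortJ[OF U_odd[OF inv] assms(4)] assms(5) by simp

lemma sepN:
  assumes inv: "\<And>x. \<tau> (\<tau> x) = x" and "oddf \<tau> \<psi>1" "oddf \<tau> \<psi>2" "k \<noteq> 0"
    and "Inv (U \<tau>) g0 (HN \<tau> \<psi>1 \<psi>2 k) u \<noteq> 0"
  shows "sep \<tau> u"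
  unfolding sep_def
  apply (rule exI[of _ "U \<tau>"], rule exI[of _ g0], rule exI[of _ "HN \<tau> \<psi>1 \<psi>2 k"])
  using goodN[OF inv U_odd[OF inv] assms(2,3,4)] assms(5) by (simp add: shortN)

lemma sepL:
  assumes inv: "\<And>x. \<tau> (\<tau> x) = x" and "oddf \<tau> \<psi>1" "oddf \<tau> \<psi>2"
    and "Inv (U \<tau>) g0 (HL \<tau> \<psi>1 \<psi>2) u \<noteq> 0"
  shows "sep \<tau> u"
  unfolding sep_def
  apply (rule exI[of _ "U \<tau>"], rule exI[of _ g0], rule exI[of _ "HL \<tau> \<psi>1 \<psi>2"])
  using goodL[OF inv U_odd[OF inv] assms(2,3)] assms(4) by (simp add: shortL U_nz)

lemma sepND:
  assumes inv: "\<And>x. \<tau> (\<tau> x) = x" and "oddf \<tau> \<psi>"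
    and "Inv (U \<tau>) g0 (HND \<psi>) u \<noteq> 0"
  shows "sep \<tau> u"
  unfolding sep_def
  apply (rule exI[of _ "U \<tau>"], rule exI[of _ g0], rule exI[of _ "HND \<psi>"])
  using goodND[OF U_odd[OF inv] assms(2)] assms(3) by (simp add: shortND)

lemma sep2:
  assumes inv: "\<And>x. \<tau> (\<tau> x) = x" and reg: "c \<noteq> \<tau> b"
  shows "sep \<tau> (wabc 2 a b c)"
proof -
  define k where "k = U \<tau> b + U \<tau> c"
  have k0: "k \<noteq> 0" "\<And>z. k \<noteq> U \<tau> z" using TWO[OF inv reg] by (auto simp: k_def)
  have k1: "U \<tau> z \<noteq> k" for z using k0(2)[of z] by metis
  have gd: "good \<tau> (U \<tau>) (gJ (U \<tau>) k) H0" by (rule goodJ[OF U_odd[OF inv] U_odd[OF inv] k0(1)])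
  have "Inv (U \<tau>) (gJ (U \<tau>) k) H0 (wabc 2 a b c) = U \<tau> a"
    unfolding wabc_explicit(2)[OF gd] using k0 k1
    by (simp add: gJ_def H0_def U_neg[OF inv] k_def[symmetric])
  thus ?thesis by (intro sepJ[OF inv U_odd[OF inv] k0]) (simp add: U_nz)
qed

lemma sep3:
  assumes inv: "\<And>x. \<tau> (\<tau> x) = x" and reg: "a \<noteq> \<tau> b"
  shows "sep \<tau> (wabc 3 a b c)"
proof -
  define k where "k = U \<tau> (\<tau> a) + U \<tau> (\<tau> b)"
  have r: "\<tau> b \<noteq> \<tau> (\<tau> a)" using reg inv by metis
  have k0: "k \<noteq> 0" "\<And>z. k \<noteq> U \<tau> z" using TWO[OF inv r] by (auto simp: k_def)
  have k1: "U \<tau> z \<noteq> k" for z using k0(2)[of z] by metis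
  have gd: "good \<tau> (U \<tau>) (gJ (U \<tau>) k) H0" by (rule goodJ[OF U_odd[OF inv] U_odd[OF inv] k0(1)])
  have e: "- U \<tau> a - U \<tau> b = k" by (simp add: k_def U_neg[OF inv, symmetric])
  have "Inv (U \<tau>) (gJ (U \<tau>) k) H0 (wabc 3 a b c) = U \<tau> c"
    unfolding wabc_explicit(3)[OF gd] e using k0 k1
    by (simp add: gJ_def H0_def)
  thus ?thesis by (intro sepJ[OF inv U_odd[OF inv] k0]) (simp add: U_nz)
qed


lemma UU_nz: "U \<tau> a a * U \<tau> b b \<noteq> 0"
  by (simp add: U_def)

lemma const_prod_nz: "(c::6) * d \<noteq> 0 \<Longrightarrow> (\<lambda>_. c) * (\<lambda>_::'a. d) \<noteq> 0"
  by (simp add: fun_eq_iff times_fun_def zero_fun_def)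

lemma fun_nz_at: "(f::'a \<Rightarrow> 6) u \<noteq> 0 \<Longrightarrow> f \<noteq> 0"
  by auto

lemma sep1:
  assumes inv: "\<And>x. \<tau> (\<tau> x) = x" and reg: "a \<noteq> \<tau> b" "\<tau> b \<noteq> c"
  shows "sep \<tau> (wabc 1 a b c)"
proof -
  let ?U = "U \<tau>"
  define nA where "nA = ?U b + ?U c"
  define nB where "nB = ?U c - ?U a"
  define nC where "nC = - ?U a - ?U b"
  have r1: "c \<noteq> \<tau> b" using reg by metis
  have r2: "\<tau> b \<noteq> \<tau> (\<tau> a)" using reg inv by metis
  have FA: "nA \<noteq> 0" "\<And>z. nA \<noteq> ?U z" using TWO[OF inv r1] by (auto simp: nA_def)
  have nC': "nC = ?U (\<tau> a) + ?U (\<tau> b)" by (simp add: nC_def U_neg[OF inv, symmetric])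
  have FC: "nC \<noteq> 0" "\<And>z. nC \<noteq> ?U z" using TWO[OF inv r2] by (auto simp: nC')
  have F3: "nB \<noteq> nA"
  proof
    assume "nB = nA"
    hence "?U (\<tau> a) = ?U b" by (simp add: nA_def nB_def U_neg[OF inv, symmetric])
    hence "\<tau> a = b" by (rule U_inj[OF inv])
    thus False using reg inv by metis
  qed
  have expl: "Inv ?U g H (wabc 1 a b c) = g a nA + g b nB + g c nC + H RLink a b nA nB
      + H RLink a c nA nC + H RLink b c nB nC" if "good \<tau> ?U g H" for g H
    using wabc_explicit(1)[OF that] by (simp add: nA_def nB_def nC_def)
  show ?thesis
  proof (cases "nC = nA")
    case False
    have k1: "?U z \<noteq> nA" for z using FA(2)[of z] by metis
    have gd: "good \<tau> ?U (gJ ?U nA) H0" by (rule goodJ[OF U_odd[OF inv] U_odd[OF inv] FA(1)])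
    have "Inv ?U (gJ ?U nA) H0 (wabc 1 a b c) = ?U a"
      unfolding expl[OF gd] using False F3 by (simp add: gJ_def H0_def)
    thus ?thesis by (intro sepJ[OF inv U_odd[OF inv] FA]) (simp add: U_nz)
  next
    case True
    show ?thesis
    proof (cases "nB = 0")
      case nB0: True
      have ca: "c = a"
      proof -
        have "?U c = ?U a" using nB0 by (simp add: nB_def)
        thus ?thesis by (rule U_inj[OF inv])
      qed
      have ab: "a \<noteq> b"
      proof
        assume ab: "a = b"
        have "nC a = nA a" using True by simp
        hence "- ?U a a - ?U a a = ?U a a + ?U a a" by (simp add: nA_def nC_def ca ab)
        hence "\<tau> a = a" by (auto simp: U_def split: if_splits)
        thus False using reg ab by metis
      qed
      define \<psi>1 where "\<psi>1 = sc \<tau> a"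
      define \<psi>2 where "\<psi>2 = sc \<tau> b"
      have gd: "good \<tau> ?U g0 (HL \<tau> \<psi>1 \<psi>2)"
        unfolding \<psi>1_def \<psi>2_def by (rule goodL[OF inv U_odd[OF inv] sc_odd[OF inv] sc_odd[OF inv]])
      have e: "Inv ?U g0 (HL \<tau> \<psi>1 \<psi>2) (wabc 1 a b c) = \<psi>1 a * \<psi>2 b"
        unfolding expl[OF gd] using nB0 True FA(1) ab reg by (simp add: g0_def HL_def)
      have "\<psi>1 a * \<psi>2 b \<noteq> 0" unfolding \<psi>1_def \<psi>2_def sc_def by (rule const_prod_nz[OF UU_nz])
      with e have "Inv ?U g0 (HL \<tau> \<psi>1 \<psi>2) (wabc 1 a b c) \<noteq> 0" by simp
      thus ?thesis
        unfolding \<psi>1_def \<psi>2_def by (intro sepL[OF inv sc_odd[OF inv] sc_odd[OF inv]])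
    next
      case nB0: False
      have ca: "c \<noteq> a" using nB0 by (auto simp: nB_def)
      have r3: "\<tau> a \<noteq> \<tau> c" using ca inv by metis
      have nB': "nB = ?U c + ?U (\<tau> a)" by (simp add: nB_def U_neg[OF inv, symmetric])
      have FB: "nB \<noteq> 0" "\<And>z. nB \<noteq> ?U z" using TWO[OF inv r3] by (auto simp: nB')
      have gd: "good \<tau> ?U (gJ ?U nB) H0" by (rule goodJ[OF U_odd[OF inv] U_odd[OF inv] FB(1)])
      have "Inv ?U (gJ ?U nB) H0 (wabc 1 a b c) = ?U b"
        unfolding expl[OF gd] using True F3 by (simp add: gJ_def H0_def)
      thus ?thesis by (intro sepJ[OF inv U_odd[OF inv] FB]) (simp add: U_nz)
    qed
  qed
qed


lemma sep4:
  assumes inv: "\<And>x. \<tau> (\<tau> x) = x" and reg: "c \<noteq> \<tau> b"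
  shows "sep \<tau> (wabc 4 a b c)"
proof -
  let ?U = "U \<tau>"
  have expl: "Inv ?U g H (wabc 4 a b c) = g b (?U c) + g c (?U (\<tau> b)) + H RNest a b 0 (?U c)
      + H RNest a c 0 (?U (\<tau> b)) + H RLink b c (?U c) (?U (\<tau> b))" if "good \<tau> ?U g H" for g H
    using wabc_explicit(4)[OF that] by (simp add: U_neg[OF inv])
  have cb: "?U c \<noteq> ?U (\<tau> b)" using U_inj[OF inv] reg by metis
  show ?thesis
  proof (cases "a \<noteq> b \<and> a \<noteq> \<tau> b")
    case True
    define \<psi>1 where "\<psi>1 = sc \<tau> a"
    define \<psi>2 where "\<psi>2 = sc \<tau> b"
    have gd: "good \<tau> ?U g0 (HN \<tau> \<psi>1 \<psi>2 (?U c))"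
      unfolding \<psi>1_def \<psi>2_def by (rule goodN[OF inv U_odd[OF inv] sc_odd[OF inv] sc_odd[OF inv] U_nz])
    have e: "Inv ?U g0 (HN \<tau> \<psi>1 \<psi>2 (?U c)) (wabc 4 a b c) = \<psi>1 a * \<psi>2 b"
      unfolding expl[OF gd] using True cb by (simp add: g0_def HN_def)
    have "\<psi>1 a * \<psi>2 b \<noteq> 0" unfolding \<psi>1_def \<psi>2_def sc_def by (rule const_prod_nz[OF UU_nz])
    with e have "Inv ?U g0 (HN \<tau> \<psi>1 \<psi>2 (?U c)) (wabc 4 a b c) \<noteq> 0" by simp
    thus ?thesis unfolding \<psi>1_def \<psi>2_def by (intro sepN[OF inv sc_odd[OF inv] sc_odd[OF inv] U_nz])
  next
    case F1: False
    show ?thesis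
    proof (cases "a \<noteq> c \<and> a \<noteq> \<tau> c")
      case True
      define \<psi>1 where "\<psi>1 = sc \<tau> a"
      define \<psi>2 where "\<psi>2 = sc \<tau> c"
      have gd: "good \<tau> ?U g0 (HN \<tau> \<psi>1 \<psi>2 (?U (\<tau> b)))"
        unfolding \<psi>1_def \<psi>2_def by (rule goodN[OF inv U_odd[OF inv] sc_odd[OF inv] sc_odd[OF inv] U_nz])
      have e: "Inv ?U g0 (HN \<tau> \<psi>1 \<psi>2 (?U (\<tau> b))) (wabc 4 a b c) = \<psi>1 a * \<psi>2 c"
        unfolding expl[OF gd] using True cb by (simp add: g0_def HN_def)
      have "\<psi>1 a * \<psi>2 c \<noteq> 0" unfolding \<psi>1_def \<psi>2_def sc_def by (rule const_prod_nz[OF UU_nz])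
      with e have "Inv ?U g0 (HN \<tau> \<psi>1 \<psi>2 (?U (\<tau> b))) (wabc 4 a b c) \<noteq> 0" by simp
      thus ?thesis unfolding \<psi>1_def \<psi>2_def by (intro sepN[OF inv sc_odd[OF inv] sc_odd[OF inv] U_nz])
    next
      case F2: False
      have bc: "c = b" using F1 F2 reg inv by metis
      have bf: "\<tau> b \<noteq> b" using reg bc by metis
      define \<psi> where "\<psi> = sc \<tau> b"
      have gd: "good \<tau> ?U g0 (HND \<psi>)"
        unfolding \<psi>_def by (rule goodND[OF U_odd[OF inv] sc_odd[OF inv]])
      have e: "Inv ?U g0 (HND \<psi>) (wabc 4 a b c) = - (2 * \<psi> a * \<psi> b * ?U b * ?U b)"
        unfolding expl[OF gd] using bc by (simp add: g0_def HND_def U_neg[OF inv, symmetric] algebra_simps)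
      have ab: "a = b \<or> a = \<tau> b" using F1 by metis
      have "(- (2 * \<psi> a * \<psi> b * ?U b * ?U b)) b \<noteq> 0"
        using ab bf inv[of b] by (auto simp: \<psi>_def sc_def U_def times_fun_def)
      hence "Inv ?U g0 (HND \<psi>) (wabc 4 a b c) \<noteq> 0" unfolding e by (rule fun_nz_at)
      thus ?thesis unfolding \<psi>_def by (intro sepND[OF inv sc_odd[OF inv]])
    qed
  qed
qed

lemma sep5:
  assumes inv: "\<And>x. \<tau> (\<tau> x) = x" and reg: "\<not> (a = b \<and> b = c \<and> a = \<tau> a)"
  shows "sep \<tau> (wabc 5 a b c)"
proof -
  let ?U = "U \<tau>"
  have expl: "Inv ?U g H (wabc 5 a b c) = g a (?U b) + g b (?U c - ?U a) + g c (?U (\<tau> b))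
      + H RLink a b (?U b) (?U c - ?U a) + H RDisj a c (?U b) (?U (\<tau> b))
      + H RLink b c (?U c - ?U a) (?U (\<tau> b))" if "good \<tau> ?U g H" for g H
    using wabc_explicit(5)[OF that] by (simp add: U_neg[OF inv])
  show ?thesis
  proof (cases "a = c")
    case False
    have r3: "\<tau> a \<noteq> \<tau> c" using False inv by metis
    define k where "k = ?U c - ?U a"
    have k': "k = ?U c + ?U (\<tau> a)" by (simp add: k_def U_neg[OF inv, symmetric])
    have FB: "k \<noteq> 0" "\<And>z. k \<noteq> ?U z" using TWO[OF inv r3] by (auto simp: k')
    have k1: "?U z \<noteq> k" for z using FB(2)[of z] by metis
    have gd: "good \<tau> ?U (gJ ?U k) H0" by (rule goodJ[OF U_odd[OF inv] U_odd[OF inv] FB(1)])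
    have "Inv ?U (gJ ?U k) H0 (wabc 5 a b c) = ?U b"
      unfolding expl[OF gd] k_def[symmetric] using k1 by (simp add: gJ_def H0_def)
    thus ?thesis by (intro sepJ[OF inv U_odd[OF inv] FB]) (simp add: U_nz)
  next
    case ac: True
    show ?thesis
    proof (cases "a \<noteq> b \<and> a \<noteq> \<tau> b")
      case True
      define \<psi>1 where "\<psi>1 = sc \<tau> a"
      define \<psi>2 where "\<psi>2 = sc \<tau> b"
      have gd: "good \<tau> ?U g0 (HL \<tau> \<psi>1 \<psi>2)"
        unfolding \<psi>1_def \<psi>2_def by (rule goodL[OF inv U_odd[OF inv] sc_odd[OF inv] sc_odd[OF inv]])
      have e: "Inv ?U g0 (HL \<tau> \<psi>1 \<psi>2) (wabc 5 a b c) = \<psi>1 a * \<psi>2 b"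
        unfolding expl[OF gd] using True ac by (simp add: g0_def HL_def U_nz)
      have "\<psi>1 a * \<psi>2 b \<noteq> 0" unfolding \<psi>1_def \<psi>2_def sc_def by (rule const_prod_nz[OF UU_nz])
      with e have "Inv ?U g0 (HL \<tau> \<psi>1 \<psi>2) (wabc 5 a b c) \<noteq> 0" by simp
      thus ?thesis unfolding \<psi>1_def \<psi>2_def by (intro sepL[OF inv sc_odd[OF inv] sc_odd[OF inv]])
    next
      case F1: False
      have ab: "b = a \<or> b = \<tau> a" using F1 inv by metis
      have af: "\<tau> a \<noteq> a" using ab reg ac by metis
      have bf: "\<tau> b \<noteq> b" using ab af inv by metis
      define \<psi> where "\<psi> = sc \<tau> a"
      have gd: "good \<tau> ?U g0 (HND \<psi>)"
        unfolding \<psi>_def by (rule goodND[OF U_odd[OF inv] sc_odd[OF inv]])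
      have e: "Inv ?U g0 (HND \<psi>) (wabc 5 a b c) = - (2 * \<psi> a * \<psi> a * ?U b * ?U b)"
        unfolding expl[OF gd] using ac by (simp add: g0_def HND_def U_neg[OF inv, symmetric] algebra_simps)
      have "(- (2 * \<psi> a * \<psi> a * ?U b * ?U b)) b \<noteq> 0"
        using af bf by (auto simp: \<psi>_def sc_def U_def times_fun_def)
      hence "Inv ?U g0 (HND \<psi>) (wabc 5 a b c) \<noteq> 0" unfolding e by (rule fun_nz_at)
      thus ?thesis unfolding \<psi>_def by (intro sepND[OF inv sc_odd[OF inv]])
    qed
  qed
qed


lemma homotopic_nanoword:
  assumes "homotopic \<tau> u v" shows "nanoword v"
proof -
  have "(nw_hstep \<tau>)\<^sup>*\<^sup>* u v" "nanoword u" using assms by (auto simp: homotopic_def)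
  thus ?thesis by (induction rule: rtranclp_induct) (auto simp: nw_hstep_def)
qed

lemma sep_not_short:
  assumes s: "sep \<tau> u" and h: "homotopic \<tau> u v" and len: "length (snd v) < 6"
  shows False
proof -
  obtain \<phi> :: "'a \<Rightarrow> 'a \<Rightarrow> 6" and g H where gd: "good \<tau> \<phi> g H"
    and sh: "\<forall>x y. g x (\<phi> y) + g y (- \<phi> x) + H RLink x y (\<phi> y) (- \<phi> x) = 0"
    and nz: "Inv \<phi> g H u \<noteq> 0"
    using s unfolding sep_def by blast
  have eq: "Inv \<phi> g H u = Inv \<phi> g H v" by (rule homotopic_inv[OF gd h])
  have "Inv \<phi> g H v = 0"
    using short_inv[OF gd homotopic_nanoword[OF h] len] sh by auto
  thus False using eq nz by simp
qed

lemma wabc_nanoword: "nanoword (wabc i a b c)"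
  by (simp add: nanoword_def wabc_def)

lemma wabc_len: "length (snd (wabc i a b c)) = 6"
  by (simp add: wabc_def)

theorem corollary12p2:
  fixes \<tau> :: "'a \<Rightarrow> 'a" and a b c :: 'a and i :: nat
  assumes "\<And>x. \<tau> (\<tau> x) = x"
    and "i \<in> {1..5}"
    and "regular \<tau> i a b c"
  shows "nw_norm \<tau> (wabc i a b c) = 3"
proof -
  note inv = assms(1)
  have s: "sep \<tau> (wabc i a b c)"
  proof -
    have "i = 1 \<or> i = 2 \<or> i = 3 \<or> i = 4 \<or> i = 5" using assms(2) by auto
    thus ?thesis
    proof (elim disjE)
      assume i: "i = 1" thus ?thesis using assms(3) sep1[OF inv] by (simp add: regular_def)
    next
      assume i: "i = 2" thus ?thesis using assms(3) sep2[OF inv] by (simp add: regular_def)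
    next
      assume i: "i = 3" thus ?thesis using assms(3) sep3[OF inv] by (simp add: regular_def)
    next
      assume i: "i = 4" thus ?thesis using assms(3) sep4[OF inv] by (simp add: regular_def)
    next
      assume i: "i = 5" thus ?thesis using assms(3) sep5[OF inv] by (simp add: regular_def)
    qed
  qed
  let ?w = "wabc i a b c"
  have hw: "homotopic \<tau> ?w ?w" by (simp add: homotopic_def wabc_nanoword)
  have L: "(LEAST n. \<exists>v. homotopic \<tau> ?w v \<and> length (snd v) = n) = 6"
  proof (rule Least_equality)
    show "\<exists>v. homotopic \<tau> ?w v \<and> length (snd v) = 6" using hw wabc_len[of i a b c] by blast
  next
    fix n assume "\<exists>v. homotopic \<tau> ?w v \<and> length (snd v) = n"
    then obtain v where "homotopic \<tau> ?w v" "length (snd v) = n" by blast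
    thus "6 \<le> n" using sep_not_short[OF s] by (meson not_le)
  qed
  show ?thesis unfolding nw_norm_def L by simp
qed


end
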